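(* Let $w:[0,1)\to[0,\infty)$ be a continuous probability density, and let $\{\tau_n\}$ be a $w$-pre-chaotic sequence of probability measures on the standard simplices $S_1^{(n)}$. For each $n$ define $w_n(\xi)=n\,\mathbb{E}_{\tau_n}[\tilde z_k]$ for $\frac{k-1}{n}<\xi\le\frac kn$, $1\le k\le n$ (and $w_n(0)=n\mathbb{E}_{\tau_n}[\tilde z_1]$). Then $$\lim_{n\to\infty}\int_0^1|w_n(\xi)-w(\xi)|\,d\xi=0.$$
   Context: $S_1^{(n)}=\{(\tilde z_1,\dots,\tilde z_n)\in[0,\infty)^n:\sum_j\tilde z_j=1\}$; $\mathbb{E}_{\tau_n}$, $\mathrm{Var}$, $\mathrm{Cov}$ refer to $\tilde z\sim\tau_n$. A sequence $\{\tau_n\}$ is called $w$-pre-chaotic if, writing $n\mathbb{E}_{\tau_n}[\tilde z_j]=w(j/n)+r_n(j)$, for each $0<\xi_*<1$ there is a constant $C<\infty$ depending only on $\xi_*$ such that for each $\epsilon>0$ there is $n_\epsilon$ with: for all $n>n_\epsilon$ and all $j,k<n\xi_*$, $|r_n(j)|<\epsilon$, $\mathrm{Var}[\tilde z_j]\le \frac{C}{n}\epsilon$ and $|\mathrm{Cov}(\tilde z_j,\tilde z_k)|\le\frac{C}{n^2}\epsilon$. *)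

theory Defs
  imports "HOL-Probability.Probability"
begin

definition std_simplex :: "nat \<Rightarrow> (nat \<Rightarrow> real) set" where
  "std_simplex n = {z. z \<in> extensional {1..n} \<and> (\<forall>j\<in>{1..n}. 0 \<le> z j) \<and> (\<Sum>j\<in>{1..n}. z j) = 1}"

definition coord_space :: "nat \<Rightarrow> (nat \<Rightarrow> real) measure" where
  "coord_space n = PiM {1..n} (\<lambda>_. lborel)"

definition prob_on_simplex :: "nat \<Rightarrow> (nat \<Rightarrow> real) measure \<Rightarrow> bool" where
  "prob_on_simplex n M \<longleftrightarrow> prob_space M \<and> sets M = sets (coord_space n)
      \<and> emeasure M (std_simplex n) = 1"

definition Ez :: "(nat \<Rightarrow> real) measure \<Rightarrow> nat \<Rightarrow> real" where
  "Ez M j = (\<integral>z. z j \<partial>M)"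

definition Covz :: "(nat \<Rightarrow> real) measure \<Rightarrow> nat \<Rightarrow> nat \<Rightarrow> real" where
  "Covz M j k = (\<integral>z. (z j - Ez M j) * (z k - Ez M k) \<partial>M)"

definition Varz :: "(nat \<Rightarrow> real) measure \<Rightarrow> nat \<Rightarrow> real" where
  "Varz M j = (\<integral>z. (z j - Ez M j)^2 \<partial>M)"

definition rem :: "(real \<Rightarrow> real) \<Rightarrow> (nat \<Rightarrow> (nat \<Rightarrow> real) measure) \<Rightarrow> nat \<Rightarrow> nat \<Rightarrow> real" where
  "rem w \<tau> n j = real n * Ez (\<tau> n) j - w (real j / real n)"

definition pre_chaotic :: "(real \<Rightarrow> real) \<Rightarrow> (nat \<Rightarrow> (nat \<Rightarrow> real) measure) \<Rightarrow> bool" where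
  "pre_chaotic w \<tau> \<longleftrightarrow>
    (\<forall>\<xi>s. 0 < \<xi>s \<and> \<xi>s < 1 \<longrightarrow>
      (\<exists>C::real. \<forall>\<epsilon>>0. \<exists>N::nat. \<forall>n>N. \<forall>j k.
         1 \<le> j \<and> 1 \<le> k \<and> real j < real n * \<xi>s \<and> real k < real n * \<xi>s \<longrightarrow>
           \<bar>rem w \<tau> n j\<bar> < \<epsilon>
           \<and> Varz (\<tau> n) j \<le> C / real n * \<epsilon>
           \<and> (j \<noteq> k \<longrightarrow> \<bar>Covz (\<tau> n) j k\<bar> \<le> C / (real n)^2 * \<epsilon>)))"

text \<open>w_n(xi) = n E[z_k] for (k-1)/n < xi <= k/n, and w_n(0) = n E[z_1].\<close>
definition wn :: "(nat \<Rightarrow> (nat \<Rightarrow> real) measure) \<Rightarrow> nat \<Rightarrow> real \<Rightarrow> real" where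
  "wn \<tau> n \<xi> = real n * Ez (\<tau> n) (if \<xi> \<le> 0 then 1 else nat \<lceil>real n * \<xi>\<rceil>)"

end

theory Submission
  imports Defs
begin

lemma tau_facts:
  assumes "prob_on_simplex n M"
  shows "\<And>j. j \<in> {1..n} \<Longrightarrow> 0 \<le> Ez M j" and "(\<Sum>j\<in>{1..n}. Ez M j) = 1"
proof -
  have P: "prob_space M" and sM: "sets M = sets (coord_space n)" and e1: "emeasure M (std_simplex n) = 1"
    using assms unfolding prob_on_simplex_def by auto
  interpret prob_space M by (rule P)
  have S: "std_simplex n \<in> sets M"
    using e1 emeasure_notin_sets by fastforce
  have AE: "AE z in M. z \<in> std_simplex n"
    using S e1 AE_in_set_eq_1 by (simp add: emeasure_eq_measure)
  have meas: "(\<lambda>z. z j) \<in> borel_measurable M" if "j \<in> {1..n}" for j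
  proof -
    have "(\<lambda>z. z j) \<in> borel_measurable (coord_space n)"
      unfolding coord_space_def using that by (simp add: measurable_component_singleton)
    then show ?thesis by (subst measurable_cong_sets[OF sM refl])
  qed
  have int: "integrable M (\<lambda>z. z j)" if "j \<in> {1..n}" for j
  proof (rule Bochner_Integration.integrable_bound[where f="\<lambda>_. 1::real"])
    show "integrable M (\<lambda>_. 1::real)" by simp
    show "(\<lambda>z. z j) \<in> borel_measurable M" by (rule meas[OF that])
    show "AE x in M. norm (x j) \<le> norm (1::real)"
      using AE
    proof eventually_elim
      case (elim z)
      then have "0 \<le> z j" "(\<Sum>i\<in>{1..n}. z i) = 1" "\<forall>i\<in>{1..n}. 0 \<le> z i" using that unfolding std_simplex_def by auto
      moreover have "z j \<le> (\<Sum>i\<in>{1..n}. z i)"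
        using that calculation by (intro member_le_sum) auto
      ultimately show ?case by simp
    qed
  qed
  show "0 \<le> Ez M j" if "j \<in> {1..n}" for j
    unfolding Ez_def
  proof (rule integral_nonneg_AE)
    show "AE x in M. 0 \<le> x j" using AE by eventually_elim (use that in \<open>auto simp: std_simplex_def\<close>)
  qed
  have "(\<Sum>j\<in>{1..n}. Ez M j) = (\<integral>z. (\<Sum>j\<in>{1..n}. z j) \<partial>M)"
    unfolding Ez_def using int by (simp add: integral_sum)
  also have "\<dots> = (\<integral>z. 1 \<partial>M)"
    using AE by (intro integral_cong_AE) (auto intro!: borel_measurable_sum meas elim!: eventually_mono simp: std_simplex_def)
  also have "\<dots> = 1" by (simp add: prob_space)
  finally show "(\<Sum>j\<in>{1..n}. Ez M j) = 1" .
qed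

lemma step_sum:
  fixes c :: "nat \<Rightarrow> real" and x :: real
  assumes n: "1 \<le> n"
  shows "(\<Sum>k\<in>{1..n}. c k * indicator {(real k - 1)/real n <.. real k / real n} x)
          = (if 0 < x \<and> x \<le> 1 then c (nat \<lceil>real n * x\<rceil>) else 0)"
proof -
  have np: "0 < real n" using n by simp
  have ind: "indicator {(real k - 1)/real n <.. real k / real n} x
      = (if 0 < x \<and> k = nat \<lceil>real n * x\<rceil> then 1 else (0::real))" if k: "k \<in> {1..n}" for k
  proof -
    have "x \<in> {(real k - 1)/real n <.. real k / real n} \<longleftrightarrow> real k - 1 < real n * x \<and> real n * x \<le> real k"
      using np by (auto simp: field_simps)
    also have "\<dots> \<longleftrightarrow> \<lceil>real n * x\<rceil> = int k"
      by (simp add: ceiling_eq_iff)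
    also have "\<dots> \<longleftrightarrow> 0 < x \<and> k = nat \<lceil>real n * x\<rceil>"
    proof
      assume h: "\<lceil>real n * x\<rceil> = int k"
      then have "real k - 1 < real n * x" by (simp add: ceiling_eq_iff)
      then have "0 < real n * x" using k by auto
      then have "0 < x" using np by (simp add: zero_less_mult_iff)
      then show "0 < x \<and> k = nat \<lceil>real n * x\<rceil>" using h by simp
    next
      assume h: "0 < x \<and> k = nat \<lceil>real n * x\<rceil>"
      then have "0 < real n * x" using np by simp
      then have "0 \<le> \<lceil>real n * x\<rceil>" by (meson ceiling_le_zero less_le_not_le linorder_linear)
      then show "\<lceil>real n * x\<rceil> = int k" using h by simp
    qed
    finally show ?thesis by (simp add: indicator_def)
  qed
  have "(\<Sum>k\<in>{1..n}. c k * indicator {(real k - 1)/real n <.. real k / real n} x)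
      = (\<Sum>k\<in>{1..n}. if 0 < x \<and> k = nat \<lceil>real n * x\<rceil> then c k else 0)"
    by (intro sum.cong refl) (simp add: ind)
  also have "\<dots> = (if 0 < x \<and> x \<le> 1 then c (nat \<lceil>real n * x\<rceil>) else 0)"
  proof (cases "0 < x")
    case True
    have "nat \<lceil>real n * x\<rceil> \<in> {1..n} \<longleftrightarrow> x \<le> 1"
    proof -
      have "0 < real n * x" using True np by simp
      then have "0 < \<lceil>real n * x\<rceil>" by (meson ceiling_le_zero not_le)
      then have a: "1 \<le> nat \<lceil>real n * x\<rceil>" by arith
      have "nat \<lceil>real n * x\<rceil> \<le> n \<longleftrightarrow> real n * x \<le> real n"
        by (simp add: nat_le_iff ceiling_le_iff)
      also have "\<dots> \<longleftrightarrow> x \<le> 1" using np by simp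
      finally show ?thesis using a by simp
    qed
    then show ?thesis using True by (simp add: sum.delta')
  next
    case False
    then show ?thesis by simp
  qed
  finally show ?thesis .
qed

lemma tail_small:
  fixes W :: "real \<Rightarrow> real"
  assumes W: "integrable lborel W" and e: "e > 0"
  shows "\<exists>b. 0 < b \<and> b < 1 \<and> integral\<^sup>L lborel (\<lambda>x. indicator {b<..<1} x * W x) < e"
proof -
  define s where "s i x = indicator {1 - 1/(real i + 2)<..<1} x * W x" for i x
  have Wm: "W \<in> borel_measurable lborel" using W by auto
  have lim: "(\<lambda>i. integral\<^sup>L lborel (s i)) \<longlonglongrightarrow> integral\<^sup>L lborel (\<lambda>x::real. 0::real)"
  proof (rule Bochner_Integration.integral_dominated_convergence[of "\<lambda>x. 0::real" lborel s "\<lambda>x. norm (W x)"])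
    show "(\<lambda>x. 0::real) \<in> borel_measurable lborel" by simp
    show "s i \<in> borel_measurable lborel" for i unfolding s_def using Wm by measurable
    show "integrable lborel (\<lambda>x. norm (W x))" using W by simp
    show "AE x in lborel. norm (s i x) \<le> norm (W x)" for i
      by (intro AE_I2) (auto simp: s_def indicator_def)
    show "AE x in lborel. (\<lambda>i. s i x) \<longlonglongrightarrow> 0"
    proof (intro AE_I2 tendsto_eventually)
      fix x :: real
      show "\<forall>\<^sub>F i in sequentially. s i x = 0"
      proof (cases "x < 1")
        case True
        obtain N :: nat where N: "1 / (1 - x) < real N" using reals_Archimedean2 by blast
        show ?thesis
        proof (rule eventually_sequentiallyI[of N])
          fix i assume "N \<le> i"
          then have "1 / (1 - x) < real i + 2" using N by linarith
          then have "1 < (real i + 2) * (1 - x)" using True by (simp add: field_simps)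
          then have "1 / (real i + 2) < 1 - x" by (simp add: field_simps)
          then show "s i x = 0" by (simp add: s_def indicator_def)
        qed
      next
        case False
        then show ?thesis by (simp add: s_def indicator_def)
      qed
    qed
  qed
  then have "\<forall>\<^sub>F i in sequentially. integral\<^sup>L lborel (s i) < e"
    using e by (intro order_tendstoD(2)) auto
  then obtain i where i: "integral\<^sup>L lborel (s i) < e"
    by (meson eventually_sequentially order_refl)
  have "0 < 1 - 1/(real i + 2)" by (simp add: field_simps)
  moreover have "1 - 1/(real i + 2) < 1" by simp
  ultimately show ?thesis using i unfolding s_def by blast
qed

lemma Ioc_fin[simp]: "emeasure lborel {a<..(b::real)} < \<top>"
  by (cases "a \<le> b") auto

theorem lemma3p4:
  fixes w :: "real \<Rightarrow> real" and \<tau> :: "nat \<Rightarrow> (nat \<Rightarrow> real) measure"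
  assumes w_cont: "continuous_on {0..<1} w"
    and w_nonneg: "\<And>x. 0 \<le> x \<Longrightarrow> x < 1 \<Longrightarrow> 0 \<le> w x"
    and w_int: "set_integrable lborel {0..<1} w"
    and w_one: "set_lebesgue_integral lborel {0..<1} w = 1"
    and tau: "\<And>n. 1 \<le> n \<Longrightarrow> prob_on_simplex n (\<tau> n)"
    and pc: "pre_chaotic w \<tau>"
  shows "(\<lambda>n. set_lebesgue_integral lborel {0..1} (\<lambda>\<xi>. \<bar>wn \<tau> n \<xi> - w \<xi>\<bar>))
           \<longlonglongrightarrow> 0"
proof -
  define c where "c n k = real n * Ez (\<tau> n) k" for n k
  define h where "h n x = (\<Sum>k\<in>{1..n}. c n k * indicator {(real k - 1)/real n <.. real k / real n} x)" for n x
  define W where "W x = indicator {0..<1} x * w x" for x :: real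
  define D where "D n x = indicator {0..<1} x * wn \<tau> n x" for n x
  have Wint: "integrable lborel W" using w_int unfolding set_integrable_def W_def by simp
  have Wone: "integral\<^sup>L lborel W = 1" using w_one unfolding set_lebesgue_integral_def W_def by simp
  have Wnn: "0 \<le> W x" for x using w_nonneg by (simp add: W_def indicator_def)
  have wn_eq: "wn \<tau> n x = c n (if x \<le> 0 then 1 else nat \<lceil>real n * x\<rceil>)" for n x
    by (simp add: wn_def c_def)
  have Dform: "D n x = h n x + indicator {0} x * c n 1 - indicator {1} x * c n n" if "1 \<le> n" for n x
    using step_sum[OF that, of "c n" x]
    by (cases "x < 0"; cases "x = 0"; cases "x < 1"; cases "x = 1") (auto simp: D_def h_def wn_eq indicator_def)
  have hint: "integrable lborel (h n)" for n
    unfolding h_def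
  proof (rule Bochner_Integration.integrable_sum)
    fix k assume "k \<in> {1..n}"
    have "integrable lborel (indicator {(real k - 1)/real n <.. real k / real n} :: real \<Rightarrow> real)"
      by (rule integrable_real_indicator) (auto simp: divide_right_mono)
    then show "integrable lborel (\<lambda>x. c n k * indicator {(real k - 1)/real n <.. real k / real n} x)"
      by simp
  qed
  have hval: "integral\<^sup>L lborel (h n) = (\<Sum>k\<in>{1..n}. Ez (\<tau> n) k)" if "1 \<le> n" for n
  proof -
    have "integral\<^sup>L lborel (h n) = (\<Sum>k\<in>{1..n}. c n k * measure lborel {(real k - 1)/real n <.. real k / real n})"
      unfolding h_def by (subst Bochner_Integration.integral_sum) (auto intro!: integrable_real_indicator)
    also have "\<dots> = (\<Sum>k\<in>{1..n}. Ez (\<tau> n) k)"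
    proof (intro sum.cong refl)
      fix k assume "k \<in> {1..n}"
      have "(real k - 1)/real n \<le> real k / real n" by (simp add: divide_right_mono)
      then show "c n k * measure lborel {(real k - 1)/real n <.. real k / real n} = Ez (\<tau> n) k"
        using that by (simp add: c_def field_simps)
    qed
    finally show ?thesis .
  qed
  have Dint: "integrable lborel (D n)" for n
  proof (cases "1 \<le> n")
    case True
    have "D n = (\<lambda>x. h n x + indicator {0} x * c n 1 - indicator {1} x * c n n)"
      using Dform[OF True] by auto
    then show ?thesis using hint
      by (auto intro!: integrable_diff integrable_add integrable_mult_left integrable_real_indicator)
  next
    case False
    then have "D n = (\<lambda>x. 0)" by (auto simp: D_def wn_def)
    then show ?thesis by simp
  qed
  have Done: "integral\<^sup>L lborel (D n) = 1" if n1: "1 \<le> n" for n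
  proof -
    have "D n = (\<lambda>x. h n x + indicator {0} x * c n 1 - indicator {1} x * c n n)"
      using Dform[OF n1] by auto
    then have "integral\<^sup>L lborel (D n) = integral\<^sup>L lborel (h n)"
      using hint by (simp add: integral_diff integral_add integrable_real_indicator)
    then show ?thesis using hval[OF n1] tau_facts(2)[OF tau[OF n1]] by simp
  qed
  have Dnn: "0 \<le> D n x" if n1: "1 \<le> n" for n x
  proof (cases "0 \<le> x \<and> x < 1")
    case True
    define k where "k = (if x \<le> 0 then 1 else nat \<lceil>real n * x\<rceil>)"
    have "k \<in> {1..n}"
    proof (cases "x \<le> 0")
      case True then show ?thesis using n1 by (simp add: k_def)
    next
      case False
      then have "0 < real n * x" using n1 by simp
      then have a: "0 < \<lceil>real n * x\<rceil>" by (meson ceiling_le_zero not_le)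
      have "real n * x \<le> real n" using n1 True by simp
      then have "\<lceil>real n * x\<rceil> \<le> int n" by (simp add: ceiling_le_iff)
      then have "1 \<le> nat \<lceil>real n * x\<rceil> \<and> nat \<lceil>real n * x\<rceil> \<le> n" using a by arith
      then show ?thesis using False by (simp add: k_def)
    qed
    then have "0 \<le> Ez (\<tau> n) k" using tau_facts(1)[OF tau[OF n1]] by blast
    then show ?thesis using True by (simp add: D_def wn_def k_def)
  next
    case False
    then show ?thesis by (auto simp: D_def indicator_def)
  qed
  have Ieq: "set_lebesgue_integral lborel {0..1} (\<lambda>\<xi>. \<bar>wn \<tau> n \<xi> - w \<xi>\<bar>) = integral\<^sup>L lborel (\<lambda>x. \<bar>D n x - W x\<bar>)" for n
  proof -
    have "(\<lambda>x. indicator {0..1} x *\<^sub>R \<bar>wn \<tau> n x - w x\<bar>)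
        = (\<lambda>x. \<bar>D n x - W x\<bar> + indicator {1} x * \<bar>wn \<tau> n 1 - w 1\<bar>)"
    proof
      fix x :: real
      show "indicator {0..1} x *\<^sub>R \<bar>wn \<tau> n x - w x\<bar> = \<bar>D n x - W x\<bar> + indicator {1} x * \<bar>wn \<tau> n 1 - w 1\<bar>"
        by (cases "x = 1"; cases "0 \<le> x \<and> x < 1") (auto simp: indicator_def D_def W_def)
    qed
    moreover have "integrable lborel (\<lambda>x. \<bar>D n x - W x\<bar>)"
      using Dint Wint by auto
    ultimately show ?thesis unfolding set_lebesgue_integral_def
      by (simp add: integral_add integrable_real_indicator)
  qed
  show ?thesis
    unfolding Ieq
  proof (rule LIMSEQ_I)
    fix r :: real assume r: "0 < r"
    obtain b where b: "0 < b" "b < 1" "integral\<^sup>L lborel (\<lambda>x. indicator {b<..<1} x * W x) < r/4"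
      using tail_small[OF Wint, of "r/4"] r by auto
    define xs where "xs = (1 + b)/2"
    have xs: "0 < xs" "xs < 1" "b < xs" using b by (auto simp: xs_def)
    define \<epsilon> where "\<epsilon> = r/16"
    have \<epsilon>: "0 < \<epsilon>" using r by (simp add: \<epsilon>_def)
    obtain C where C: "\<forall>\<epsilon>>0. \<exists>N::nat. \<forall>n>N. \<forall>j k.
         1 \<le> j \<and> 1 \<le> k \<and> real j < real n * xs \<and> real k < real n * xs \<longrightarrow>
           \<bar>rem w \<tau> n j\<bar> < \<epsilon>
           \<and> Varz (\<tau> n) j \<le> C / real n * \<epsilon>
           \<and> (j \<noteq> k \<longrightarrow> \<bar>Covz (\<tau> n) j k\<bar> \<le> C / (real n)^2 * \<epsilon>)"
      using pc xs unfolding pre_chaotic_def by blast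
    then obtain N :: nat where N0: "\<forall>n>N. \<forall>j k.
         1 \<le> j \<and> 1 \<le> k \<and> real j < real n * xs \<and> real k < real n * xs \<longrightarrow>
           \<bar>rem w \<tau> n j\<bar> < \<epsilon>
           \<and> Varz (\<tau> n) j \<le> C / real n * \<epsilon>
           \<and> (j \<noteq> k \<longrightarrow> \<bar>Covz (\<tau> n) j k\<bar> \<le> C / (real n)^2 * \<epsilon>)"
      using \<epsilon> by blast
    have N: "\<bar>rem w \<tau> n j\<bar> < \<epsilon>" if "N < n" "1 \<le> j" "real j < real n * xs" for n j
      using N0 that by blast
    have uc: "uniformly_continuous_on {0..xs} w"
      by (rule compact_uniformly_continuous) (use xs in \<open>auto intro: continuous_on_subset[OF w_cont]\<close>)
    obtain d where d: "d > 0" "\<forall>x\<in>{0..xs}. \<forall>x'\<in>{0..xs}. dist x' x < d \<longrightarrow> dist (w x') (w x) < \<epsilon>"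
      using uc \<epsilon> unfolding uniformly_continuous_on_def by metis
    obtain M :: nat where M: "max (real N) (max (1/d) (2/(1-b))) < real M"
      using reals_Archimedean2 by blast
    show "\<exists>no. \<forall>n\<ge>no. norm (integral\<^sup>L lborel (\<lambda>x. \<bar>D n x - W x\<bar>) - 0) < r"
    proof (intro exI allI impI)
      fix n assume nM: "M \<le> n"
      have pos: "0 < 2/(1-b)" using b by simp
      have Mn: "real M \<le> real n" using nM by simp
      have n1: "1 \<le> n" using M pos Mn by linarith
      have np: "0 < real n" using n1 by simp
      have nN: "N < n" using M Mn by linarith
      have nd: "1/real n < d"
      proof -
        have "1/d < real n" using M Mn by linarith
        then show ?thesis using d(1) np by (simp add: field_simps)
      qed
      have nb: "real n * b + 1 < real n * xs"
      proof -
        have "2/(1-b) < real n" using M Mn by linarith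
        then have "2 < real n * (1 - b)" using b by (simp add: field_simps)
        then show ?thesis by (simp add: xs_def field_simps)
      qed
      have pt: "\<bar>wn \<tau> n x - w x\<bar> < 2*\<epsilon>" if x: "x \<in> {0..b}" for x
      proof -
        define k where "k = (if x \<le> 0 then 1 else nat \<lceil>real n * x\<rceil>)"
        have kb: "1 \<le> k \<and> real n * x \<le> real k \<and> real k \<le> real n * x + 1"
        proof (cases "x \<le> 0")
          case True
          then have "x = 0" using x by simp
          then show ?thesis by (simp add: k_def)
        next
          case False
          then have "0 < real n * x" using np by simp
          then have a: "0 < \<lceil>real n * x\<rceil>" by (meson ceiling_le_zero not_le)
          have "real_of_int \<lceil>real n * x\<rceil> - 1 < real n * x \<and> real n * x \<le> real_of_int \<lceil>real n * x\<rceil>"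
            using ceiling_eq_iff by blast
          moreover have "real k = real_of_int \<lceil>real n * x\<rceil>" using a False by (simp add: k_def)
          moreover have "1 \<le> k"
          proof -
            have "1 \<le> nat \<lceil>real n * x\<rceil>" using a by arith
            then show ?thesis using False by (simp add: k_def)
          qed
          ultimately show ?thesis by linarith
        qed
        have kxs: "real k < real n * xs"
        proof -
          have "real n * x \<le> real n * b" using x np by simp
          then show ?thesis using kb nb by linarith
        qed
        have wnk: "wn \<tau> n x = real n * Ez (\<tau> n) k" by (simp add: wn_def k_def)
        have r1: "\<bar>real n * Ez (\<tau> n) k - w (real k / real n)\<bar> < \<epsilon>"
          using N[OF nN _ kxs] kb unfolding rem_def by simp
        have kn: "x \<le> real k / real n \<and> real k / real n \<le> x + 1 / real n"
          using kb np by (simp add: field_simps)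
        have dist: "dist (real k / real n) x < d" using kn nd by (simp add: dist_real_def)
        have kin: "real k / real n \<in> {0..xs}" using kxs np x by (simp add: field_simps)
        have xin: "x \<in> {0..xs}" using x xs by simp
        have r2: "\<bar>w (real k / real n) - w x\<bar> < \<epsilon>"
          using d(2) kin xin dist by (simp add: dist_real_def)
        show ?thesis using r1 r2 wnk by linarith
      qed
      have ptw: "\<bar>D n x - W x\<bar> \<le> (D n x - W x) + 2 * (indicator {b<..<1} x * W x) + 4*\<epsilon> * indicator {0..b} x" for x
      proof -
        consider "x \<in> {0..b}" | "x \<in> {b<..<1}" | "x < 0 \<or> 1 \<le> x" by fastforce
        then show ?thesis
        proof cases
          case 1
          then have "D n x = wn \<tau> n x" "W x = w x" using b by (auto simp: D_def W_def)
          then show ?thesis using pt[OF 1] 1 by (simp add: indicator_def)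
        next
          case 2
          then show ?thesis using Dnn[OF n1, of x] Wnn[of x] by (simp add: indicator_def)
        next
          case 3
          then show ?thesis using \<epsilon> by (auto simp: D_def W_def indicator_def)
        qed
      qed
      have int_abs: "integrable lborel (\<lambda>x. \<bar>D n x - W x\<bar>)" using Dint Wint by auto
      have int_T: "integrable lborel (\<lambda>x. indicator {b<..<1} x * W x)"
        using integrable_mult_indicator[OF _ Wint, of "{b<..<1}"] by simp
      have int_I: "integrable lborel (\<lambda>x. indicator {0..b} x :: real)"
        by (rule integrable_real_indicator) (use b in auto)
      have "integral\<^sup>L lborel (\<lambda>x. \<bar>D n x - W x\<bar>)
          \<le> integral\<^sup>L lborel (\<lambda>x. (D n x - W x) + 2 * (indicator {b<..<1} x * W x) + 4*\<epsilon> * indicator {0..b} x)"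
        using ptw int_abs int_T int_I Dint Wint
        by (intro integral_mono) auto
      also have "\<dots> = (integral\<^sup>L lborel (D n) - integral\<^sup>L lborel W)
            + 2 * integral\<^sup>L lborel (\<lambda>x. indicator {b<..<1} x * W x) + 4*\<epsilon> * b"
        using int_T int_I Dint Wint b by (simp add: integral_add integral_diff)
      also have "\<dots> < r"
      proof -
        have rb: "r * b < r" using r b(2) by (metis mult.right_neutral mult_strict_left_mono)
        have "4 * \<epsilon> * b = (r * b) / 4" by (simp add: \<epsilon>_def)
        then show ?thesis using Done[OF n1] Wone b(3) rb r by linarith
      qed
      finally have up: "integral\<^sup>L lborel (\<lambda>x. \<bar>D n x - W x\<bar>) < r" .
      have "0 \<le> integral\<^sup>L lborel (\<lambda>x. \<bar>D n x - W x\<bar>)" by simp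
      then show "norm (integral\<^sup>L lborel (\<lambda>x. \<bar>D n x - W x\<bar>) - 0) < r" using up by simp
    qed
  qed
qed

end
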